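(* The polynomial $p(t)=t^4+3t^2+1$ is irreducible in $\Gamma_7=\mathbb{Q}(\zeta_7)[t,t^{-1}]$, where $\zeta_7$ is a primitive $7$-th root of unity. *)

theory Defs
  imports Complex_Main "HOL-Algebra.Ring_Divisibility"
begin

definition zeta7 :: complex where
  "zeta7 = cis (2 * pi / 7)"

definition Qzeta7 :: "complex set" where
  "Qzeta7 = \<Inter> {F. 0 \<in> F \<and> 1 \<in> F \<and> zeta7 \<in> F \<and>
                  (\<forall>x\<in>F. \<forall>y\<in>F. x + y \<in> F \<and> x * y \<in> F) \<and>
                  (\<forall>x\<in>F. - x \<in> F \<and> inverse x \<in> F)}"

text \<open>Laurent polynomials over a subfield K of C: finitely supported coefficient
  functions int => complex (coefficient of t^n at n) with all coefficients in K.\<close>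
definition laurent_mult :: "(int \<Rightarrow> complex) \<Rightarrow> (int \<Rightarrow> complex) \<Rightarrow> int \<Rightarrow> complex" where
  "laurent_mult f g = (\<lambda>n. \<Sum>m\<in>{m. f m \<noteq> 0}. f m * g (n - m))"

definition laurent_ring :: "complex set \<Rightarrow> (int \<Rightarrow> complex) ring" where
  "laurent_ring K = \<lparr> carrier = {f. finite {n. f n \<noteq> 0} \<and> (\<forall>n. f n \<in> K)},
                       monoid.mult = laurent_mult,
                       one = (\<lambda>n. if n = 0 then 1 else 0),
                       zero = (\<lambda>n. 0),
                       add = (\<lambda>f g n. f n + g n) \<rparr>"

definition Gamma7 :: "(int \<Rightarrow> complex) ring" where
  "Gamma7 = laurent_ring Qzeta7"

definition p_poly :: "int \<Rightarrow> complex" where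
  "p_poly = (\<lambda>n. if n = 0 then 1 else if n = 2 then 3 else if n = 4 then 1 else 0)"

end

theory Submission
  imports Defs "HOL-Computational_Algebra.Computational_Algebra" "HOL-Computational_Algebra.Field_as_Ring"
begin


lemma z7: "zeta7 ^ 7 = 1"
  unfolding zeta7_def DeMoivre by simp

lemma zne1: "zeta7 \<noteq> 1"
proof
  assume "zeta7 = 1"
  hence "Im zeta7 = 0" by simp
  moreover have "sin (2*pi/7) > 0" by (rule sin_gt_zero) auto
  ultimately show False unfolding zeta7_def by simp
qed

lemma zS: "1 + zeta7 + zeta7^2 + zeta7^3 + zeta7^4 + zeta7^5 + zeta7^6 = 0"
proof -
  have "(zeta7 - 1) * (1 + zeta7 + zeta7^2 + zeta7^3 + zeta7^4 + zeta7^5 + zeta7^6) = zeta7^7 - 1"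
    by (simp add: algebra_simps eval_nat_numeral)
  with z7 zne1 show ?thesis by simp
qed

definition c1 :: complex where "c1 = zeta7 + zeta7^6"
definition c2 :: complex where "c2 = zeta7^2 + zeta7^5"
definition c3 :: complex where "c3 = zeta7^3 + zeta7^4"
definition ww :: complex where "ww = 2*(zeta7 + zeta7^2 + zeta7^4) + 1"

lemma id_template: fixes G Q :: complex
  assumes "G = Q * (1 + zeta7 + zeta7^2 + zeta7^3 + zeta7^4 + zeta7^5 + zeta7^6)" shows "G = 0"
  using assms zS by simp

lemma f1: "c1^3 + c1^2 - 2*c1 - 1 = 0"
  unfolding c1_def
  by (rule id_template[where Q = "((-1) + (-1)*zeta7 + 3*zeta7^2 + (-1)*zeta7^4 + (-2)*zeta7^6 + 3*zeta7^7 + (-1)*zeta7^11 + 1*zeta7^12)"])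
     (simp add: algebra_simps eval_nat_numeral)

lemma f2: "c2^3 + c2^2 - 2*c2 - 1 = 0"
  unfolding c2_def
  by (rule id_template[where Q = "((-1)*1 + 1*zeta7 + (-2)*zeta7^2 + 2*zeta7^3 + 1*zeta7^4 + (-3)*zeta7^5 + 3*zeta7^6 + (-1)*zeta7^8 + 1*zeta7^9)"])
     (simp add: algebra_simps eval_nat_numeral)

lemma f3: "c3^3 + c3^2 - 2*c3 - 1 = 0"
  unfolding c3_def
  by (rule id_template[where Q = "((-1)*1 + 1*zeta7 + (-2)*zeta7^3 + 2*zeta7^5 + 1*zeta7^6)"])
     (simp add: algebra_simps eval_nat_numeral)

lemma ww2: "ww^2 = -7"
proof -
  have "ww^2 + 7 = 0" unfolding ww_def
  by (rule id_template[where Q = "(8*1 + (-4)*zeta7 + 4*zeta7^2)"])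
     (simp add: algebra_simps eval_nat_numeral)
  thus ?thesis by (simp add: eq_neg_iff_add_eq_0)
qed

lemma zw: "zeta7 = c1/2 + (-(2*c1^2 - c1 - 6)/14) * ww"
proof -
  have "7*c1 - (2*c1^2 - c1 - 6) * ww - 14*zeta7 = 0" unfolding c1_def ww_def
  by (rule id_template[where Q = "(6*1 + 6*zeta7^2 + (-14)*zeta7^3 + 10*zeta7^4 + (-6)*zeta7^5 + 2*zeta7^6 + (-4)*zeta7^8 + 4*zeta7^9 + (-4)*zeta7^10)"])
     (simp add: algebra_simps eval_nat_numeral)
  thus ?thesis by (simp add: field_simps)
qed

lemma p1: "c1 + c2 + c3 = -1"
proof -
  have "c1 + c2 + c3 + 1 = 0" unfolding c1_def c2_def c3_def
    by (rule id_template[where Q = "1"]) (simp add: algebra_simps eval_nat_numeral)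
  thus ?thesis by (simp add: eq_neg_iff_add_eq_0)
qed

lemma p2: "c1^2 + c2^2 + c3^2 = 5"
proof -
  have "c1^2 + c2^2 + c3^2 - 5 = 0" unfolding c1_def c2_def c3_def
    by (rule id_template[where Q = "((-5)*1 + 5*zeta7 + 1*zeta7^2 + (-1)*zeta7^3 + 1*zeta7^4 + (-1)*zeta7^5 + 1*zeta7^6)"]) (simp add: algebra_simps eval_nat_numeral)
  thus ?thesis by simp
qed

lemma cnjz: "cnj zeta7 = zeta7^6"
proof -
  have n: "norm zeta7 = 1" unfolding zeta7_def by simp
  have a: "zeta7 * cnj zeta7 = 1" using complex_norm_square[of zeta7] n by simp
  have b: "zeta7 * zeta7^6 = 1" using z7 by (simp add: power_Suc[symmetric])
  have "cnj zeta7 = cnj zeta7 * (zeta7 * zeta7^6)" using b by simp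
  also have "\<dots> = (zeta7 * cnj zeta7) * zeta7^6" by (simp add: algebra_simps)
  finally show ?thesis using a by simp
qed

lemma zpow_red: "zeta7^(n+7) = zeta7^n"
  using z7 by (simp add: power_add)

lemma c_real: "c1 \<in> \<real>" "c2 \<in> \<real>" "c3 \<in> \<real>"
proof -
  have "c1 = zeta7 + cnj zeta7" unfolding c1_def cnjz ..
  thus "c1 \<in> \<real>" by (metis complex_add_cnj Reals_of_real)
  have "cnj (zeta7^2) = zeta7^5" using zpow_red[of 5]
    by (simp add: cnjz power_mult[symmetric])
  hence "c2 = zeta7^2 + cnj (zeta7^2)" unfolding c2_def by simp
  thus "c2 \<in> \<real>" by (metis complex_add_cnj Reals_of_real)
  have "cnj (zeta7^3) = zeta7^4" using zpow_red[of 4] zpow_red[of 11]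
    by (simp add: cnjz power_mult[symmetric])
  hence "c3 = zeta7^3 + cnj (zeta7^3)" unfolding c3_def by (simp add: add.commute)
  thus "c3 \<in> \<real>" by (metis complex_add_cnj Reals_of_real)
qed



definition ev :: "rat poly \<Rightarrow> complex \<Rightarrow> complex" where
  "ev g x = poly (map_poly of_rat g) x"

lemma mp_add: "map_poly (of_rat::rat\<Rightarrow>complex) (p+q) = map_poly of_rat p + map_poly of_rat q"
  by (rule poly_eqI) (simp add: coeff_map_poly of_rat_add)
lemma mp_diff: "map_poly (of_rat::rat\<Rightarrow>complex) (p-q) = map_poly of_rat p - map_poly of_rat q"
  by (rule poly_eqI) (simp add: coeff_map_poly of_rat_diff)
lemma mp_mult: "map_poly (of_rat::rat\<Rightarrow>complex) (p*q) = map_poly of_rat p * map_poly of_rat q"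
  by (rule poly_eqI) (simp add: coeff_map_poly coeff_mult of_rat_sum of_rat_mult)
lemma mp_const: "map_poly (of_rat::rat\<Rightarrow>complex) [:q:] = [:of_rat q:]"
  by (rule poly_eqI) (simp add: coeff_map_poly coeff_pCons split: nat.splits)

lemma ev_add[simp]: "ev (p+q) x = ev p x + ev q x" by (simp add: ev_def mp_add)
lemma ev_diff[simp]: "ev (p-q) x = ev p x - ev q x" by (simp add: ev_def mp_diff)
lemma ev_mult[simp]: "ev (p*q) x = ev p x * ev q x" by (simp add: ev_def mp_mult)
lemma ev_const[simp]: "ev [:q:] x = of_rat q" by (simp add: ev_def mp_const)
lemma ev_one[simp]: "ev 1 x = 1" using ev_const[of 1 x] by (simp add: pCons_one)
lemma ev_pow[simp]: "ev (p^n) x = ev p x ^ n" by (induction n) auto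

definition fq :: "rat poly" where "fq = [:-1,-2,1,1:]"

lemma ev_fq: "ev fq x = x^3 + x^2 - 2*x - 1"
  by (simp add: ev_def fq_def map_poly_pCons algebra_simps eval_nat_numeral)

lemma poly_fq: "poly fq x = x^3 + x^2 - 2*x - 1"
  by (simp add: fq_def algebra_simps eval_nat_numeral)

lemma norat: "(x::rat)^3 + x^2 - 2*x - 1 \<noteq> 0"
proof
  assume h: "x^3 + x^2 - 2*x - 1 = 0"
  obtain a b where ab: "quotient_of x = (a,b)" by (cases "quotient_of x")
  have b0: "b > 0" using quotient_of_denom_pos[OF ab] .
  have cop: "coprime a b" using quotient_of_coprime[OF ab] .
  have x: "x = of_int a / of_int b" using quotient_of_div[OF ab] .
  have "of_int (a^3 + a^2*b - 2*a*b^2 - b^3) = (of_int b)^3 * (x^3 + x^2 - 2*x - 1)"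
    using b0 by (simp add: x field_simps power3_eq_cube power2_eq_square)
  hence "rat_of_int (a^3 + a^2*b - 2*a*b^2 - b^3) = 0" by (simp only: h mult_zero_right)
  hence e: "a^3 + a^2*b - 2*a*b^2 - b^3 = 0" by (simp only: of_int_eq_0_iff)
  have "a^3 = b * (b^2 + 2*a*b - a^2)" using e by (simp add: algebra_simps power2_eq_square power3_eq_cube)
  hence "b dvd a^3" by simp
  moreover have "coprime b (a^3)" using cop by (simp add: coprime_commute)
  ultimately have "is_unit b" by (metis coprime_common_divisor dvd_refl)
  hence b1: "b = 1" using b0 by auto
  hence "a * (a^2 + a - 2) = 1" using e by (simp add: algebra_simps power2_eq_square power3_eq_cube)
  hence "is_unit a" by (metis dvd_triv_left)
  hence "a = 1 \<or> a = -1" by auto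
  thus False using e b1 by auto
qed

lemma deg1_root: fixes d :: "'a::field poly" assumes "degree d = 1" shows "\<exists>x. poly d x = 0"
proof -
  have d: "d = [:coeff d 0, coeff d 1:]"
    by (rule poly_eqI) (auto simp: coeff_pCons coeff_eq_0 assms split: nat.splits)
  have "d \<noteq> 0" using assms by auto
  hence "coeff d (degree d) \<noteq> 0" by simp
  hence "coeff d 1 \<noteq> 0" using assms by simp
  hence "poly d (- coeff d 0 / coeff d 1) = 0" by (subst d) (simp add: field_simps)
  thus ?thesis by blast
qed

lemma irr: "irreducible fq"
proof (rule irreducibleI)
  have dfq: "degree fq = 3" by (simp add: fq_def)
  show nz: "fq \<noteq> 0" by (simp add: fq_def)
  show "\<not> fq dvd 1" using is_unit_iff_degree[OF nz] dfq by simp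
  have noroot: False if d1: "degree d = 1" and d2: "d dvd fq" for d
  proof -
    obtain x where "poly d x = 0" using deg1_root[OF d1] by blast
    moreover obtain e where "fq = d * e" using d2 by blast
    ultimately have "poly fq x = 0" by (metis poly_mult mult_zero_left)
    thus False using norat[of x] poly_fq by simp
  qed
  fix a b assume ab: "fq = a * b"
  hence a0: "a \<noteq> 0" and b0: "b \<noteq> 0" using nz by auto
  have "degree a + degree b = 3" using degree_mult_eq[OF a0 b0] ab dfq by simp
  moreover have "a dvd fq" "b dvd fq" by (simp_all add: ab)
  ultimately have "degree a = 0 \<or> degree b = 0" using noroot
  proof -
    assume s: "degree a + degree b = 3" and da: "a dvd fq" "b dvd fq"
    have "degree a = 0 \<or> degree b = 0 \<or> degree a = 1 \<or> degree b = 1" using s by arith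
    thus ?thesis using noroot[of a] noroot[of b] da by auto
  qed
  thus "a dvd 1 \<or> b dvd 1" using is_unit_iff_degree a0 b0 by blast
qed

lemma ev_fq_c: "ev fq c1 = 0" "ev fq c2 = 0" "ev fq c3 = 0"
  using f1 f2 f3 by (simp_all add: ev_fq)

lemma fq_dvd: assumes "ev g c1 = 0" shows "fq dvd g"
proof (rule ccontr)
  assume "\<not> fq dvd g"
  hence "coprime fq g" by (metis irr coprimeI dvdE dvd_mult2 irreducibleD')
  hence "gcd fq g = 1" by simp
  hence "fst (bezout_coefficients fq g) * fq + snd (bezout_coefficients fq g) * g = 1"
    using bezout_coefficients_fst_snd by metis
  hence "ev (fst (bezout_coefficients fq g) * fq + snd (bezout_coefficients fq g) * g) c1 = 1"
    by simp
  thus False using assms ev_fq_c by simp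
qed



lemma Rats_Reals: "(x::complex) \<in> \<rat> \<Longrightarrow> x \<in> \<real>"
  by (erule Rats_cases') auto

definition R3 :: "complex set" where "R3 = {ev g c1 | g. True}"

lemma R3I: "ev g c1 \<in> R3" unfolding R3_def by blast
lemma R3E: "y \<in> R3 \<Longrightarrow> \<exists>g. y = ev g c1" unfolding R3_def by blast

lemma R3_add: "x \<in> R3 \<Longrightarrow> y \<in> R3 \<Longrightarrow> x + y \<in> R3" by (metis R3E R3I ev_add)
lemma R3_diff: "x \<in> R3 \<Longrightarrow> y \<in> R3 \<Longrightarrow> x - y \<in> R3" by (metis R3E R3I ev_diff)
lemma R3_mult: "x \<in> R3 \<Longrightarrow> y \<in> R3 \<Longrightarrow> x * y \<in> R3" by (metis R3E R3I ev_mult)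
lemma R3_rat: "of_rat q \<in> R3" by (metis R3I ev_const)
lemma R3_0: "0 \<in> R3" using R3_rat[of 0] by simp
lemma R3_1: "1 \<in> R3" using R3_rat[of 1] by simp
lemma R3_neg: "x \<in> R3 \<Longrightarrow> - x \<in> R3" using R3_diff[OF R3_0] by fastforce
lemma R3_num: "(numeral n :: complex) \<in> R3" using R3_rat[of "numeral n"] by simp
lemma R3_c1: "c1 \<in> R3"
proof -
  have "ev [:0,1:] c1 = c1" by (simp add: ev_def map_poly_pCons)
  thus ?thesis by (metis R3I)
qed

lemma R3_inv: assumes "y \<in> R3" shows "inverse y \<in> R3"
proof -
  obtain g where y: "y = ev g c1" using R3E[OF assms] by blast
  show ?thesis
  proof (cases "y = 0")
    case True then show ?thesis using R3_0 by simp
  next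
    case False
    have "\<not> fq dvd g"
    proof
      assume "fq dvd g" then obtain k where "g = fq * k" by blast
      hence "y = 0" using y ev_fq_c by simp
      with False show False by simp
    qed
    hence "coprime fq g" by (metis irr coprimeI dvdE dvd_mult2 irreducibleD')
    hence "gcd fq g = 1" by simp
    hence "fst (bezout_coefficients fq g) * fq + snd (bezout_coefficients fq g) * g = 1"
      using bezout_coefficients_fst_snd by metis
    hence "ev (fst (bezout_coefficients fq g) * fq + snd (bezout_coefficients fq g) * g) c1 = 1"
      by simp
    hence "y * ev (snd (bezout_coefficients fq g)) c1 = 1" using ev_fq_c y by (simp add: mult.commute)
    hence "inverse y = ev (snd (bezout_coefficients fq g)) c1" by (rule inverse_unique)
    thus ?thesis by (simp add: R3I)
  qed
qed

lemma ev_real: assumes "x \<in> \<real>" shows "ev g x \<in> \<real>"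
proof -
  have r: "\<And>q. (of_rat q::complex) \<in> \<real>" by (rule Rats_Reals) simp
  have "ev g x = (\<Sum>i\<le>degree (map_poly (of_rat::rat\<Rightarrow>complex) g). of_rat (coeff g i) * x ^ i)"
    unfolding ev_def poly_altdef by (simp add: coeff_map_poly)
  also have "\<dots> \<in> \<real>" using assms r by (auto intro!: sum_in_Reals Reals_mult Reals_power)
  finally show ?thesis .
qed

lemma R3_real: "y \<in> R3 \<Longrightarrow> y \<in> \<real>" using ev_real[OF c_real(1)] R3E by blast

lemma pow_rec: fixes x :: complex assumes "x^3 + x^2 - 2*x - 1 = 0"
  shows "x^(m+3) = -(x^(m+2)) + 2*x^(m+1) + x^m"
proof -
  have x3: "x^3 = 1 + 2*x - x^2" using assms by (simp add: algebra_simps)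
  have "x^(m+3) = x^m * x^3" by (simp add: power_add)
  also have "\<dots> = x^m * (1 + 2*x - x^2)" by (simp add: x3)
  also have "\<dots> = -(x^(m+2)) + 2*x^(m+1) + x^m" by (simp add: power_add algebra_simps power2_eq_square)
  finally show ?thesis .
qed

lemma psum: "c1^n + c2^n + c3^n \<in> \<rat>"
proof (induction n rule: less_induct)
  case (less n)
  have "n = 0 \<or> n = 1 \<or> n = 2 \<or> (\<exists>m. n = m + 3)" by presburger
  then consider "n = 0" | "n = 1" | "n = 2" | m where "n = m + 3" by blast
  then show ?case
  proof cases
    case 1 then show ?thesis by simp
  next
    case 2 then show ?thesis using p1 by simp
  next
    case 3 then show ?thesis using p2 by simp
  next
    case 4
    have "c1^n + c2^n + c3^n = - (c1^(m+2) + c2^(m+2) + c3^(m+2)) + 2 * (c1^(m+1) + c2^(m+1) + c3^(m+1)) + (c1^m + c2^m + c3^m)"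
      unfolding 4 pow_rec[OF f1] pow_rec[OF f2] pow_rec[OF f3] by (simp add: algebra_simps)
    also have "\<dots> \<in> \<rat>"
    proof -
      have a: "c1^(m+2) + c2^(m+2) + c3^(m+2) \<in> \<rat>" "c1^(m+1) + c2^(m+1) + c3^(m+1) \<in> \<rat>"
        "c1^m + c2^m + c3^m \<in> \<rat>" using 4 by (intro less.IH; simp)+
      show ?thesis using a by (metis Rats_add Rats_mult Rats_minus_iff Rats_number_of)
    qed
    finally show ?thesis .
  qed
qed

lemma evsum: "ev g c1 + ev g c2 + ev g c3 \<in> \<rat>"
proof -
  let ?P = "map_poly (of_rat::rat\<Rightarrow>complex) g"
  have "ev g c1 + ev g c2 + ev g c3 = (\<Sum>i\<le>degree ?P. of_rat (coeff g i) * (c1^i + c2^i + c3^i))"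
    unfolding ev_def poly_altdef by (simp add: coeff_map_poly sum.distrib distrib_left)
  also have "\<dots> \<in> \<rat>" using psum by (auto intro!: Rats_sum Rats_mult)
  finally show ?thesis .
qed

lemma nonsq_int: fixes a k n :: int assumes "k \<ge> 0" "k^2 < n" "n < (k+1)^2" shows "a^2 \<noteq> n"
proof
  assume a: "a^2 = n"
  have sq: "a^2 = \<bar>a\<bar>^2" by simp
  show False
  proof (cases "\<bar>a\<bar> \<le> k")
    case True
    hence "\<bar>a\<bar>^2 \<le> k^2" by (intro power_mono) auto
    thus False using a sq assms by linarith
  next
    case False
    hence "(k+1)^2 \<le> \<bar>a\<bar>^2" using assms by (intro power_mono) auto
    thus False using a sq assms by linarith
  qed
qed

lemma rat_nosq: assumes "(q::rat)^2 = of_nat m" "m \<in> {5,7,35}" shows False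
proof -
  obtain a b where ab: "quotient_of q = (a,b)" by (cases "quotient_of q")
  have b0: "b > 0" using quotient_of_denom_pos[OF ab] .
  have cop: "coprime a b" using quotient_of_coprime[OF ab] .
  have x: "q = of_int a / of_int b" using quotient_of_div[OF ab] .
  have "rat_of_int (a^2) = of_int (int m * b^2)" using assms(1) b0
    by (simp add: x field_simps power2_eq_square)
  hence e: "a^2 = int m * b^2" by (simp only: of_int_eq_iff)
  hence "b dvd a^2" by (simp add: power2_eq_square)
  moreover have "coprime b (a^2)" using cop by (simp add: coprime_commute)
  ultimately have "is_unit b" by (metis coprime_common_divisor dvd_refl)
  hence "b = 1" using b0 by auto
  hence "a^2 = int m" using e by simp
  moreover have "a^2 \<noteq> 5" by (rule nonsq_int[of 2]) auto
  moreover have "a^2 \<noteq> 7" by (rule nonsq_int[of 2]) auto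
  moreover have "a^2 \<noteq> 35" by (rule nonsq_int[of 5]) auto
  ultimately show False using assms(2) by auto
qed

lemma nosq: assumes "y \<in> R3" "y^2 = of_nat m" "m \<in> {5,7,35}" shows False
proof -
  obtain g where y: "y = ev g c1" using R3E[OF assms(1)] by blast
  define h where "h = g^2 - [:of_nat m:]"
  have "ev h c1 = 0" using assms(2) y by (simp add: h_def)
  then obtain k where hk: "h = fq * k" using fq_dvd by blast
  have "ev h c2 = 0" "ev h c3 = 0" using ev_fq_c by (simp_all add: hk)
  hence s: "(ev g c2)^2 = y^2" "(ev g c3)^2 = y^2" using assms(2) by (simp_all add: h_def)
  have "ev g c2 = y \<or> ev g c2 = - y" "ev g c3 = y \<or> ev g c3 = - y"
    using s by (simp_all add: power2_eq_iff)
  hence "y + ev g c2 + ev g c3 = 3 * y \<or> y + ev g c2 + ev g c3 = y \<or> y + ev g c2 + ev g c3 = - y"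
    by auto
  moreover have "y + ev g c2 + ev g c3 \<in> \<rat>" using evsum y by simp
  ultimately have "y \<in> \<rat>"
    by (metis Rats_minus_iff Rats_divide Rats_number_of nonzero_mult_div_cancel_left zero_neq_numeral)
  then obtain q where q: "y = of_rat q" by (erule Rats_cases)
  have "of_rat (q^2) = (of_rat (of_nat m) :: complex)" using assms(2) q by (simp add: of_rat_power)
  hence "q^2 = of_nat m" by (simp only: of_rat_eq_iff)
  thus False using rat_nosq assms(3) by blast
qed



definition FF :: "complex set" where "FF = {a + b * ww | a b. a \<in> R3 \<and> b \<in> R3}"

lemma FFI: "a \<in> R3 \<Longrightarrow> b \<in> R3 \<Longrightarrow> a + b * ww \<in> FF" unfolding FF_def by blast

lemma real_sq_neg: fixes y :: complex and c :: real assumes "y \<in> \<real>" "y^2 = - of_real c" "c > 0" shows False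
proof -
  obtain t where t: "y = of_real t" using assms(1) by (auto elim: Reals_cases)
  have "of_real (t^2) = (of_real (-c) :: complex)" using assms(2) t by simp
  hence "t^2 = -c" by (simp only: of_real_eq_iff)
  moreover have "t^2 \<ge> 0" by simp
  ultimately show False using assms(3) by simp
qed

lemma R3_div: "x \<in> R3 \<Longrightarrow> y \<in> R3 \<Longrightarrow> x / y \<in> R3"
  by (simp add: divide_inverse R3_mult R3_inv)

lemma zeta_FF: "zeta7 \<in> FF"
proof -
  have "-(2*c1^2 - c1 - 6)/14 \<in> R3"
    by (intro R3_div R3_neg R3_diff R3_mult R3_num R3_c1) (simp add: power2_eq_square R3_mult R3_c1)
  moreover have "c1/2 \<in> R3" by (intro R3_div R3_num R3_c1)
  ultimately show ?thesis by (subst zw) (rule FFI)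
qed

lemma FF_closed:
  "0 \<in> FF" "1 \<in> FF" "zeta7 \<in> FF"
  "x \<in> FF \<Longrightarrow> y \<in> FF \<Longrightarrow> x + y \<in> FF"
  "x \<in> FF \<Longrightarrow> y \<in> FF \<Longrightarrow> x * y \<in> FF"
  "x \<in> FF \<Longrightarrow> - x \<in> FF"
  "x \<in> FF \<Longrightarrow> inverse x \<in> FF"
proof -
  show "0 \<in> FF" using FFI[OF R3_0 R3_0] by simp
  show "1 \<in> FF" using FFI[OF R3_1 R3_0] by simp
  show "zeta7 \<in> FF" by (rule zeta_FF)
next
  assume "x \<in> FF" "y \<in> FF"
  then obtain a b a' b' where ab: "a \<in> R3" "b \<in> R3" "x = a + b * ww"
    and ab': "a' \<in> R3" "b' \<in> R3" "y = a' + b' * ww" unfolding FF_def by blast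
  have "x + y = (a + a') + (b + b') * ww" using ab ab' by (simp add: algebra_simps)
  thus "x + y \<in> FF" using ab ab' by (metis FFI R3_add)
  have w: "ww*ww = -7" using ww2 by (simp add: power2_eq_square)
  have "x*y = a*a' + (a*b' + a'*b)*ww + b*b'*(ww*ww)" using ab ab' by (simp add: algebra_simps)
  also have "\<dots> = (a*a' - 7*(b*b')) + (a*b' + a'*b)*ww" by (simp add: w)
  finally have xy: "x*y = (a*a' - 7*(b*b')) + (a*b' + a'*b)*ww" .
  have "a*a' - 7*(b*b') \<in> R3" "a*b' + a'*b \<in> R3" using ab ab'
    by (auto intro!: R3_diff R3_mult R3_add R3_num)
  thus "x * y \<in> FF" unfolding xy by (rule FFI)
next
  assume "x \<in> FF"
  then obtain a b where ab: "a \<in> R3" "b \<in> R3" "x = a + b * ww" unfolding FF_def by blast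
  have "- x = (-a) + (-b) * ww" using ab by simp
  thus "- x \<in> FF" using ab by (metis FFI R3_neg)
  show "inverse x \<in> FF"
  proof (cases "x = 0")
    case True thus ?thesis using FFI[OF R3_0 R3_0] by simp
  next
    case False
    define N where "N = a^2 + 7*b^2"
    have NR: "N \<in> R3" unfolding N_def using ab by (simp add: power2_eq_square R3_add R3_mult R3_num)
    have N0: "N \<noteq> 0"
    proof
      assume N: "N = 0"
      obtain s where s: "a = of_real s" using R3_real[OF ab(1)] by (auto elim: Reals_cases)
      obtain t where t: "b = of_real t" using R3_real[OF ab(2)] by (auto elim: Reals_cases)
      have "of_real (s^2 + 7*t^2) = (0::complex)" using N s t unfolding N_def by simp
      hence "s^2 + 7*t^2 = 0" by (simp only: of_real_eq_0_iff)
      hence "s^2 = 0" "t^2 = 0" using zero_le_power2[of s] zero_le_power2[of t] by linarith+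
      hence "s = 0" "t = 0" by simp_all
      thus False using False ab s t by simp
    qed
    have "x * (a/N + (-b/N) * ww) = (a^2 - b^2 * ww^2) / N" using ab N0
      by (simp add: field_simps power2_eq_square)
    also have "\<dots> = 1" using N0 ww2 unfolding N_def by simp
    finally have "inverse x = a/N + (-b/N) * ww" by (rule inverse_unique)
    moreover have "a/N \<in> R3" "-b/N \<in> R3" using ab NR by (auto intro!: R3_div R3_neg)
    ultimately show ?thesis by (metis FFI)
  qed
qed

lemma Q_sub_FF: "Qzeta7 \<subseteq> FF"
  unfolding Qzeta7_def by (rule Inter_lower) (simp add: FF_closed)

lemma FF_nosq: assumes "x \<in> FF" "x^2 = of_int m" "m \<in> {5, -1, -5}" shows False
proof -
  obtain a b where ab: "a \<in> R3" "b \<in> R3" "x = a + b * ww" using assms(1) unfolding FF_def by blast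
  have ar: "a \<in> \<real>" and br: "b \<in> \<real>" using ab R3_real by auto
  have "x^2 = a^2 + 2*a*b*ww + b^2*ww^2" using ab by (simp add: power2_eq_square algebra_simps)
  hence x2: "x^2 = (a^2 - 7*b^2) + 2*a*b*ww" using ww2 by simp
  show False
  proof (cases "a = 0")
    case True
    hence e: "(7*b)^2 = - 7 * of_int m" using assms(2) x2 by (simp add: power2_eq_square)
    have r7: "7*b \<in> R3" using ab by (simp add: R3_mult R3_num)
    consider "m = 5" | "m = -1" | "m = -5" using assms(3) by auto
    thus False
    proof cases
      case 1 thus False using e real_sq_neg[of "7*b" 35] br by simp
    next
      case 2 thus False using e nosq[OF r7, of 7] by simp
    next
      case 3 thus False using e nosq[OF r7, of 35] by simp
    qed
  next
    case a0: False
    show False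
    proof (cases "b = 0")
      case True
      hence e: "a^2 = of_int m" using assms(2) x2 by simp
      consider "m = 5" | "m = -1" | "m = -5" using assms(3) by auto
      thus False
      proof cases
        case 1 thus False using e nosq[OF ab(1), of 5] by simp
      next
        case 2 thus False using e real_sq_neg[OF ar, of 1] by simp
      next
        case 3 thus False using e real_sq_neg[OF ar, of 5] by simp
      qed
    next
      case False
      have "ww = (of_int m - (a^2 - 7*b^2)) / (2*a*b)" using x2 assms(2) a0 False
        by (simp add: field_simps)
      also have "\<dots> \<in> \<real>" using ar br by (auto intro!: Reals_divide Reals_diff Reals_mult Reals_power)
      finally have "ww \<in> \<real>" .
      thus False using real_sq_neg[of ww 7] ww2 by simp
    qed
  qed
qed

lemma K_nosq: assumes "x \<in> Qzeta7" shows "x^2 \<noteq> 5" "x^2 \<noteq> -1" "x^2 \<noteq> -5"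
  using FF_nosq[of x 5] FF_nosq[of x "-1"] FF_nosq[of x "-5"] Q_sub_FF assms by auto



lemma K_closed:
  "0 \<in> Qzeta7" "1 \<in> Qzeta7" "zeta7 \<in> Qzeta7"
  "x \<in> Qzeta7 \<Longrightarrow> y \<in> Qzeta7 \<Longrightarrow> x + y \<in> Qzeta7"
  "x \<in> Qzeta7 \<Longrightarrow> y \<in> Qzeta7 \<Longrightarrow> x * y \<in> Qzeta7"
  "x \<in> Qzeta7 \<Longrightarrow> - x \<in> Qzeta7"
  "x \<in> Qzeta7 \<Longrightarrow> inverse x \<in> Qzeta7"
  unfolding Qzeta7_def by auto

lemma K_diff: "x \<in> Qzeta7 \<Longrightarrow> y \<in> Qzeta7 \<Longrightarrow> x - y \<in> Qzeta7"
  using K_closed(4,6) by (metis diff_conv_add_uminus)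
lemma K_div: "x \<in> Qzeta7 \<Longrightarrow> y \<in> Qzeta7 \<Longrightarrow> x / y \<in> Qzeta7"
  using K_closed(5,7) by (metis divide_inverse)
lemma K_nat: "(of_nat k :: complex) \<in> Qzeta7"
  by (induction k) (simp_all add: K_closed)
lemma K_num: "(numeral n :: complex) \<in> Qzeta7"
  using K_nat[of "numeral n"] by simp

definition PP :: "complex poly" where "PP = [:1,0,3,0,1:]"

lemma poly_PP: "poly PP x = 1 + 3*x^2 + x^4"
  by (simp add: PP_def algebra_simps eval_nat_numeral)

lemma no_K_root: assumes "r \<in> Qzeta7" "poly PP r = 0" shows False
proof -
  have "(2*r^2 + 3)^2 - 5 = 4 * poly PP r" unfolding poly_PP
    by (simp add: algebra_simps eval_nat_numeral)
  hence "(2*r^2 + 3)^2 = 5" using assms(2) by simp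
  moreover have "2*r^2 + 3 \<in> Qzeta7" using assms(1)
    by (simp add: power2_eq_square K_closed K_num)
  ultimately show False using K_nosq by blast
qed



lemma quad_alg: fixes a0 a1 a2 b0 b1 b2 :: complex
  assumes e0: "a0*b0 = 1" and e1: "a0*b1 + a1*b0 = 0" and e2: "a0*b2 + a1*b1 + a2*b0 = 3"
    and e3: "a1*b2 + a2*b1 = 0" and e4: "a2*b2 = 1"
  shows "(2*(a0/a2) - 3)^2 = 5 \<or> (a1/a2)^2 = -1 \<or> (a1/a2)^2 = -5"
proof -
  have a2: "a2 \<noteq> 0" using e4 by auto
  have b2: "b2 = 1/a2" using e4 a2 by (simp add: field_simps)
  define q where "q = a0/a2"
  define s where "s = a1/a2"
  define u where "u = a2*b1"
  define v where "v = a2*b0"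
  have E1: "q*v = 1" using e0 a2 unfolding q_def v_def by simp
  have E2: "q*u + s*v = 0" using e1 a2 unfolding q_def s_def u_def v_def by simp
  have su: "s*u = a1*b1" unfolding s_def u_def using a2 by simp
  have qb: "q = a0*b2" unfolding q_def b2 by simp
  have E3: "q + s*u + v = 3" using e2 unfolding su qb v_def by (simp add: mult.commute)
  have E4: "s + u = 0" using e3 a2 b2 unfolding s_def u_def by (simp add: divide_inverse)
  have u: "u = -s" using E4 by (simp add: eq_neg_iff_add_eq_0 add.commute)
  have "s * (v - q) = 0" using E2 u by (simp add: algebra_simps)
  hence "s = 0 \<or> v = q" by simp
  thus ?thesis
  proof
    assume s: "s = 0"
    hence v: "v = 3 - q" using E3 by (simp add: algebra_simps)
    have "(2*q - 3)^2 = 5 - 4*(q*v - 1)" unfolding v by (simp add: algebra_simps power2_eq_square)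
    thus ?thesis using E1 by (simp add: q_def)
  next
    assume v: "v = q"
    hence q2: "q*q = 1" using E1 by simp
    have s2: "s^2 = 2*q - 3" using E3 u v by (simp add: algebra_simps power2_eq_square)
    have "(q - 1) * (q + 1) = 0" using q2 by (simp add: algebra_simps)
    hence "q = 1 \<or> q = -1" by (simp add: eq_neg_iff_add_eq_0)
    thus ?thesis using s2 by (auto simp: s_def)
  qed
qed

lemma deg2: fixes A :: "'a::zero poly" assumes "degree A = 2" shows "A = [:coeff A 0, coeff A 1, coeff A 2:]"
  by (rule poly_eqI) (auto simp: coeff_pCons coeff_eq_0 assms numeral_2_eq_2 split: nat.splits)

lemma deg1_K_root: assumes "degree A = 1" "\<forall>k. coeff A k \<in> Qzeta7"
  shows "\<exists>r\<in>Qzeta7. poly A r = 0"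
proof -
  have d: "A = [:coeff A 0, coeff A 1:]"
    by (rule poly_eqI) (auto simp: coeff_pCons coeff_eq_0 assms split: nat.splits)
  have "A \<noteq> 0" using assms by auto
  hence "coeff A (degree A) \<noteq> 0" by simp
  hence c1: "coeff A 1 \<noteq> 0" using assms by simp
  hence "poly A (- coeff A 0 / coeff A 1) = 0" by (subst d) (simp add: field_simps)
  moreover have "- coeff A 0 / coeff A 1 \<in> Qzeta7" using assms(2) by (simp add: K_div K_closed)
  ultimately show ?thesis by blast
qed

lemma poly_fact: fixes A B :: "complex poly"
  assumes AB: "A * B = PP" and KA: "\<forall>k. coeff A k \<in> Qzeta7" and KB: "\<forall>k. coeff B k \<in> Qzeta7"
  shows "degree A = 0 \<or> degree B = 0"
proof (rule ccontr)
  assume nd: "\<not> (degree A = 0 \<or> degree B = 0)"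
  have PP0: "PP \<noteq> 0" by (simp add: PP_def)
  hence A0: "A \<noteq> 0" and B0: "B \<noteq> 0" using AB by auto
  have "degree PP = 4" by (simp add: PP_def)
  hence s: "degree A + degree B = 4" using degree_mult_eq[OF A0 B0] AB by simp
  have noroot1: False if h1: "degree D = 1" and h2: "\<forall>k. coeff D k \<in> Qzeta7" and h3: "D dvd PP" for D
  proof -
    obtain r where r: "r \<in> Qzeta7" "poly D r = 0" using deg1_K_root[OF h1 h2] by blast
    obtain E where "PP = D * E" using h3 by blast
    hence "poly PP r = 0" using r by (metis poly_mult mult_zero_left)
    thus False using no_K_root r by blast
  qed
  have "degree A = 1 \<or> degree B = 1 \<or> (degree A = 2 \<and> degree B = 2)" using s nd by arith
  moreover have "A dvd PP" "B dvd PP" by (metis AB dvd_triv_left, metis AB dvd_triv_right)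
  moreover have "\<not> (degree A = 2 \<and> degree B = 2)"
  proof
    assume d: "degree A = 2 \<and> degree B = 2"
    define a0 where "a0 = coeff A 0"
    define a1 where "a1 = coeff A 1"
    define a2 where "a2 = coeff A 2"
    define b0 where "b0 = coeff B 0"
    define b1 where "b1 = coeff B 1"
    define b2 where "b2 = coeff B 2"
    have "[:a0,a1,a2:] * [:b0,b1,b2:] = [:1,0,3,0,1:]"
      using AB deg2[of A] deg2[of B] d unfolding PP_def a0_def a1_def a2_def b0_def b1_def b2_def by simp
    hence eqs: "a0*b0 = 1" "a0*b1 + a1*b0 = 0" "a0*b2 + a1*b1 + a2*b0 = 3"
      "a1*b2 + a2*b1 = 0" "a2*b2 = 1"
      by (simp_all add: algebra_simps)
    have K: "a0 \<in> Qzeta7" "a1 \<in> Qzeta7" "a2 \<in> Qzeta7" using KA by (simp_all add: a0_def a1_def a2_def)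
    have "2*(a0/a2) - 3 \<in> Qzeta7" "a1/a2 \<in> Qzeta7" using K by (simp_all add: K_div K_diff K_closed K_num)
    thus False using quad_alg[OF eqs] K_nosq by blast
  qed
  ultimately show False using noroot1[of A] noroot1[of B] KA KB by auto
qed



definition supp :: "(int \<Rightarrow> complex) \<Rightarrow> int set" where "supp f = {n. f n \<noteq> 0}"
definition E :: "(int \<Rightarrow> complex) \<Rightarrow> complex \<Rightarrow> complex" where
  "E f z = (\<Sum>n\<in>supp f. f n * z powi n)"

lemma E_sup: assumes "finite S" "supp f \<subseteq> S" shows "E f z = (\<Sum>n\<in>S. f n * z powi n)"
  unfolding E_def by (rule sum.mono_neutral_left) (use assms in \<open>auto simp: supp_def\<close>)

lemma E_mult: assumes f: "finite (supp f)" and g: "finite (supp g)" and z: "z \<noteq> 0"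
  shows "E (laurent_mult f g) z = E f z * E g z"
proof -
  define T where "T = (\<lambda>(m,k). m + k) ` (supp f \<times> supp g)"
  have fT: "finite T" using f g by (simp add: T_def)
  have sT: "supp (laurent_mult f g) \<subseteq> T"
  proof
    fix n assume "n \<in> supp (laurent_mult f g)"
    hence "(\<Sum>m\<in>supp f. f m * g (n - m)) \<noteq> 0" by (simp add: supp_def laurent_mult_def)
    then obtain m where m: "m \<in> supp f" "f m * g (n-m) \<noteq> 0" by (meson sum.neutral)
    hence "n - m \<in> supp g" by (auto simp: supp_def)
    hence "(m, n - m) \<in> supp f \<times> supp g" using m by simp
    hence "(\<lambda>(m,k). m + k) (m, n - m) \<in> T" unfolding T_def by (rule imageI)
    thus "n \<in> T" by simp
  qed
  have inner: "(\<Sum>n\<in>T. g (n - m) * z powi n) = z powi m * E g z" if m: "m \<in> supp f" for m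
  proof -
    have sub: "(\<lambda>k. m + k) ` supp g \<subseteq> T" using m unfolding T_def by auto
    have zero: "g (n - m) * z powi n = 0" if n: "n \<in> T - (\<lambda>k. m + k) ` supp g" for n
    proof (rule ccontr)
      assume "g (n - m) * z powi n \<noteq> 0"
      hence "n - m \<in> supp g" by (auto simp: supp_def)
      hence "m + (n - m) \<in> (\<lambda>k. m + k) ` supp g" by (rule imageI)
      thus False using n by simp
    qed
    have "(\<Sum>n\<in>T. g (n - m) * z powi n) = (\<Sum>n\<in>(\<lambda>k. m + k) ` supp g. g (n - m) * z powi n)"
      by (rule sum.mono_neutral_right[OF fT sub]) (use zero in blast)
    also have "\<dots> = (\<Sum>k\<in>supp g. g k * z powi (m + k))"
      by (subst sum.reindex) (auto simp: inj_on_def)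
    also have "\<dots> = z powi m * E g z" unfolding E_def using z
      by (simp add: power_int_add sum_distrib_left algebra_simps)
    finally show ?thesis .
  qed
  have "E (laurent_mult f g) z = (\<Sum>n\<in>T. laurent_mult f g n * z powi n)" by (rule E_sup[OF fT sT])
  also have "\<dots> = (\<Sum>n\<in>T. \<Sum>m\<in>supp f. f m * (g (n-m) * z powi n))"
    by (simp add: laurent_mult_def supp_def sum_distrib_right mult.assoc)
  also have "\<dots> = (\<Sum>m\<in>supp f. f m * (\<Sum>n\<in>T. g (n-m) * z powi n))"
    by (subst sum.swap) (simp add: sum_distrib_left)
  also have "\<dots> = (\<Sum>m\<in>supp f. f m * (z powi m * E g z))" using inner by simp
  also have "\<dots> = E f z * E g z" unfolding E_def[of f] sum_distrib_right
    by (rule sum.cong) (auto simp: ac_simps)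
  finally show ?thesis .
qed

definition lo :: "(int \<Rightarrow> complex) \<Rightarrow> int" where "lo f = Min (supp f)"
definition hi :: "(int \<Rightarrow> complex) \<Rightarrow> int" where "hi f = Max (supp f)"
definition Qp :: "(int \<Rightarrow> complex) \<Rightarrow> complex poly" where
  "Qp f = (\<Sum>k\<le>nat (hi f - lo f). monom (f (lo f + int k)) k)"

lemma lohi: assumes "finite (supp f)" "supp f \<noteq> {}"
  shows "lo f \<in> supp f" "hi f \<in> supp f" "n \<in> supp f \<Longrightarrow> lo f \<le> n" "n \<in> supp f \<Longrightarrow> n \<le> hi f"
  using assms by (auto simp: lo_def hi_def)

lemma coeff_Qp: assumes "finite (supp f)" "supp f \<noteq> {}" shows "coeff (Qp f) k = f (lo f + int k)"
proof -
  have "coeff (Qp f) k = (\<Sum>j\<le>nat (hi f - lo f). if j = k then f (lo f + int j) else 0)"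
    unfolding Qp_def by (simp add: coeff_sum coeff_monom)
  also have "\<dots> = (if k \<le> nat (hi f - lo f) then f (lo f + int k) else 0)"
    by (simp add: sum.delta)
  also have "\<dots> = f (lo f + int k)"
  proof (cases "k \<le> nat (hi f - lo f)")
    case False
    hence "lo f + int k \<notin> supp f" using lohi(4)[OF assms] by force
    thus ?thesis using False by (simp add: supp_def)
  qed simp
  finally show ?thesis .
qed

lemma E_Qp: assumes "finite (supp f)" "supp f \<noteq> {}" "z \<noteq> 0"
  shows "E f z = z powi lo f * poly (Qp f) z"
proof -
  have le: "lo f \<le> hi f" using lohi[OF assms(1,2)] by auto
  have "E f z = (\<Sum>n\<in>{lo f..hi f}. f n * z powi n)"
    by (rule E_sup) (use lohi[OF assms(1,2)] in auto)
  also have "\<dots> = (\<Sum>k\<le>nat (hi f - lo f). f (lo f + int k) * z powi (lo f + int k))"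
    by (rule sum.reindex_bij_witness[of _ "\<lambda>k. lo f + int k" "\<lambda>n. nat (n - lo f)"]) (use le in auto)
  also have "\<dots> = z powi lo f * poly (Qp f) z"
    unfolding Qp_def using assms(3)
    by (simp add: poly_sum poly_monom power_int_add sum_distrib_left algebra_simps)
  finally show ?thesis .
qed

lemma poly_eq_nz: fixes A B :: "complex poly" assumes "\<And>z. z \<noteq> 0 \<Longrightarrow> poly A z = poly B z"
  shows "A = B"
proof (rule ccontr)
  assume "A \<noteq> B"
  hence "A - B \<noteq> 0" by simp
  hence "finite {z. poly (A - B) z = 0}" by (rule poly_roots_finite)
  moreover have "UNIV - {0} \<subseteq> {z. poly (A - B) z = 0}" using assms by auto
  ultimately have "finite (UNIV - {0::complex})" by (rule finite_subset[rotated])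
  thus False by (simp add: infinite_UNIV_char_0)
qed

lemma supp_p: "supp p_poly = {0,2,4}" by (auto simp: supp_def p_poly_def)

lemma E_p: "E p_poly z = poly PP z"
  unfolding E_def supp_p by (simp add: p_poly_def poly_PP)



lemma lm_zero_if: "laurent_mult b c 0 = 0 \<Longrightarrow> p_poly = laurent_mult b c \<Longrightarrow> False"
  by (metis p_poly_def one_neq_zero)

lemma main_fact:
  assumes b: "finite (supp b)" "\<forall>n. b n \<in> Qzeta7" and c: "finite (supp c)" "\<forall>n. c n \<in> Qzeta7"
    and p: "p_poly = laurent_mult b c"
  shows "supp b \<noteq> {}" "supp c \<noteq> {}" "degree (Qp b) = 0 \<or> degree (Qp c) = 0"
proof -
  show bne: "supp b \<noteq> {}"
  proof
    assume "supp b = {}"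
    hence "laurent_mult b c 0 = 0" by (simp add: laurent_mult_def supp_def)
    thus False using p lm_zero_if by blast
  qed
  show cne: "supp c \<noteq> {}"
  proof
    assume "supp c = {}"
    hence "\<And>n. c n = 0" by (auto simp: supp_def)
    hence "laurent_mult b c 0 = 0" by (simp add: laurent_mult_def)
    thus False using p lm_zero_if by blast
  qed
  define k where "k = lo b + lo c"
  define R where "R = Qp b * Qp c"
  have R0: "coeff R 0 \<noteq> 0" unfolding R_def
    using coeff_Qp[OF b(1) bne, of 0] coeff_Qp[OF c(1) cne, of 0] lohi(1)[OF b(1) bne] lohi(1)[OF c(1) cne]
    by (simp add: coeff_mult_0 supp_def)
  have key: "poly PP z = z powi k * poly R z" if z: "z \<noteq> 0" for z
  proof -
    have "poly PP z = E p_poly z" by (simp add: E_p)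
    also have "\<dots> = E b z * E c z" using E_mult[OF b(1) c(1) z] p by simp
    also have "\<dots> = (z powi lo b * z powi lo c) * (poly (Qp b) z * poly (Qp c) z)"
      unfolding E_Qp[OF b(1) bne z] E_Qp[OF c(1) cne z] by (simp add: ac_simps)
    also have "\<dots> = z powi k * poly R z" by (simp add: R_def k_def power_int_add z)
    finally show ?thesis .
  qed
  have PR: "PP = R"
  proof (cases "k \<ge> 0")
    case True
    have "PP = monom 1 (nat k) * R"
    proof (rule poly_eq_nz)
      fix z :: complex assume z: "z \<noteq> 0"
      have "z powi k = z ^ nat k" using True by (metis nonneg_int_cases nat_int power_int_of_nat)
      thus "poly PP z = poly (monom 1 (nat k) * R) z" using key[OF z] by (simp add: poly_monom)
    qed
    hence "coeff PP 0 = coeff (monom 1 (nat k) * R) 0" by simp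
    hence "nat k = 0" by (cases "nat k = 0") (simp_all add: coeff_monom_mult PP_def)
    thus ?thesis using \<open>PP = monom 1 (nat k) * R\<close> by simp
  next
    case False
    have "R = monom 1 (nat (-k)) * PP"
    proof (rule poly_eq_nz)
      fix z :: complex assume z: "z \<noteq> 0"
      have e: "int (nat (-k)) = -k" using False by simp
      have "z ^ nat (-k) = z powi (-k)" by (metis e power_int_of_nat)
      also have "\<dots> = inverse (z powi k)" by (simp add: power_int_minus)
      finally have zz: "z ^ nat (-k) * z powi k = 1" using z by simp
      have "poly (monom 1 (nat (-k)) * PP) z = z ^ nat (-k) * (z powi k * poly R z)"
        using key[OF z] by (simp add: poly_monom)
      also have "\<dots> = (z ^ nat (-k) * z powi k) * poly R z" by (simp add: mult.assoc)
      finally show "poly R z = poly (monom 1 (nat (-k)) * PP) z" using zz by simp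
    qed
    hence "coeff R 0 = coeff (monom 1 (nat (-k)) * PP) 0" by simp
    hence "coeff R 0 = 0" using False by (simp add: coeff_monom_mult)
    thus ?thesis using R0 by simp
  qed
  have KB: "\<forall>j. coeff (Qp b) j \<in> Qzeta7" using coeff_Qp[OF b(1) bne] b(2) by simp
  have KC: "\<forall>j. coeff (Qp c) j \<in> Qzeta7" using coeff_Qp[OF c(1) cne] c(2) by simp
  show "degree (Qp b) = 0 \<or> degree (Qp c) = 0"
    using poly_fact[OF _ KB KC] PR R_def by simp
qed



definition lmono :: "complex \<Rightarrow> int \<Rightarrow> int \<Rightarrow> complex" where
  "lmono u k = (\<lambda>n. if n = k then u else 0)"

lemma G_carrier: "carrier Gamma7 = {f. finite {n. f n \<noteq> 0} \<and> (\<forall>n. f n \<in> Qzeta7)}"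
  by (simp add: Gamma7_def laurent_ring_def)
lemma G_mult: "x \<otimes>\<^bsub>Gamma7\<^esub> y = laurent_mult x y"
  by (simp add: Gamma7_def laurent_ring_def)
lemma G_one: "\<one>\<^bsub>Gamma7\<^esub> = (\<lambda>n. if n = 0 then 1 else 0)"
  by (simp add: Gamma7_def laurent_ring_def)
lemma G_zero: "\<zero>\<^bsub>Gamma7\<^esub> = (\<lambda>n. 0)"
  by (simp add: Gamma7_def laurent_ring_def)

lemma lm_mono_right: assumes "finite (supp f)"
  shows "laurent_mult f (lmono u k) = (\<lambda>n. f (n - k) * u)"
proof
  fix n
  have "laurent_mult f (lmono u k) n = (\<Sum>m\<in>{m. f m \<noteq> 0}. if m = n - k then f m * u else 0)"
    unfolding laurent_mult_def lmono_def by (rule sum.cong) auto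
  also have "\<dots> = f (n - k) * u" using assms by (simp add: supp_def sum.delta')
  finally show "laurent_mult f (lmono u k) n = f (n - k) * u" .
qed

lemma lm_mono_left: assumes "u \<noteq> 0"
  shows "laurent_mult (lmono u k) g = (\<lambda>n. u * g (n - k))"
proof
  fix n
  have "{m. lmono u k m \<noteq> 0} = {k}" using assms by (auto simp: lmono_def)
  thus "laurent_mult (lmono u k) g n = u * g (n - k)" unfolding laurent_mult_def by (simp add: lmono_def)
qed

lemma mono_carrier: "u \<in> Qzeta7 \<Longrightarrow> lmono u k \<in> carrier Gamma7"
proof -
  assume u: "u \<in> Qzeta7"
  have "{n. lmono u k n \<noteq> 0} \<subseteq> {k}" by (auto simp: lmono_def)
  hence "finite {n. lmono u k n \<noteq> 0}" by (rule finite_subset) simp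
  thus ?thesis using u K_closed(1) by (auto simp: G_carrier lmono_def)
qed

lemma mono_unit: assumes "u \<in> Qzeta7" "u \<noteq> 0" shows "lmono u k \<in> Units Gamma7"
proof -
  have v: "inverse u \<in> Qzeta7" "inverse u \<noteq> 0" using assms K_closed(7) by auto
  have "lmono (inverse u) (-k) \<otimes>\<^bsub>Gamma7\<^esub> lmono u k = \<one>\<^bsub>Gamma7\<^esub>"
    unfolding G_mult G_one lm_mono_left[OF v(2)] using assms by (auto simp: lmono_def)
  moreover have "lmono u k \<otimes>\<^bsub>Gamma7\<^esub> lmono (inverse u) (-k) = \<one>\<^bsub>Gamma7\<^esub>"
    unfolding G_mult G_one lm_mono_left[OF assms(2)] using assms by (auto simp: lmono_def)
  ultimately show ?thesis using mono_carrier[OF assms(1)] mono_carrier[OF v(1)]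
    unfolding Units_def by blast
qed

lemma deg0_mono: assumes "finite (supp f)" "supp f \<noteq> {}" "degree (Qp f) = 0"
  shows "f = lmono (f (lo f)) (lo f)"
proof
  fix n
  show "f n = lmono (f (lo f)) (lo f) n"
  proof (cases "n = lo f")
    case True thus ?thesis by (simp add: lmono_def)
  next
    case False
    show ?thesis
    proof (cases "n < lo f")
      case True
      hence "n \<notin> supp f" using lohi(3)[OF assms(1,2)] by force
      thus ?thesis using False by (simp add: supp_def lmono_def)
    next
      case nl: False
      define j where "j = nat (n - lo f)"
      have n: "n = lo f + int j" and j: "j > 0" using nl False by (auto simp: j_def)
      have "coeff (Qp f) j = 0" using assms(3) j by (simp add: coeff_eq_0)
      thus ?thesis using coeff_Qp[OF assms(1,2), of j] n False by (simp add: lmono_def)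
    qed
  qed
qed

lemma E_one: "E (\<lambda>n. if n = 0 then 1 else 0) z = 1"
proof -
  have "supp (\<lambda>n. if n = 0 then 1 else 0) = {0}" by (auto simp: supp_def)
  thus ?thesis unfolding E_def by simp
qed

lemma PP_root: "\<exists>r. r \<noteq> 0 \<and> poly PP r = 0"
proof -
  define f :: real where "f = (1 + sqrt 5) / 2"
  have s: "sqrt 5 * sqrt 5 = (5::real)" by simp
  have f2: "f^2 = f + 1" unfolding f_def power2_eq_square using s by (simp add: field_simps) 
  define t where "t = complex_of_real f"
  have t2: "t^2 = t + 1" unfolding t_def using arg_cong[OF f2, of complex_of_real] by simp
  define r where "r = \<i> * t"
  have r2: "r^2 = - (t^2)" unfolding r_def by (simp add: power_mult_distrib)
  have "poly PP r = 1 + 3 * r^2 + (r^2)^2" unfolding poly_PP by (simp add: power_mult[symmetric])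
  also have "\<dots> = 1 - 3 * (t + 1) + (t + 1)^2" unfolding r2 t2 by (simp add: power2_eq_square algebra_simps)
  also have "\<dots> = t^2 - t - 1" by (simp add: algebra_simps power2_eq_square)
  also have "\<dots> = 0" using t2 by simp
  finally have "poly PP r = 0" .
  moreover have "r \<noteq> 0"
  proof
    assume "r = 0"
    hence "t = 0" unfolding r_def by simp
    thus False using t2 by simp
  qed
  ultimately show ?thesis by blast
qed

theorem mainTheorem6:
  shows "ring_irreducible\<^bsub>Gamma7\<^esub> p_poly"
proof -
  have finp: "finite (supp p_poly)" by (simp add: supp_p)
  have nz: "p_poly \<noteq> \<zero>\<^bsub>Gamma7\<^esub>"
  proof
    assume "p_poly = \<zero>\<^bsub>Gamma7\<^esub>"
    hence "p_poly = (\<lambda>n. 0)" by (simp only: G_zero)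
    hence "p_poly 0 = 0" by (rule fun_cong[where x=0, THEN trans]) simp
    thus False by (simp add: p_poly_def)
  qed
  have nu: "p_poly \<notin> Units Gamma7"
  proof
    assume "p_poly \<in> Units Gamma7"
    then obtain x where x: "x \<in> carrier Gamma7" "x \<otimes>\<^bsub>Gamma7\<^esub> p_poly = \<one>\<^bsub>Gamma7\<^esub>"
      unfolding Units_def by blast
    have fx: "finite (supp x)" using x(1) by (simp add: G_carrier supp_def)
    obtain r where r: "r \<noteq> 0" "poly PP r = 0" using PP_root by blast
    have "E (laurent_mult x p_poly) r = E x r * E p_poly r" by (rule E_mult[OF fx finp r(1)])
    also have "\<dots> = 0" using r by (simp add: E_p)
    finally have "E (\<one>\<^bsub>Gamma7\<^esub>) r = 0" using x(2) by (simp add: G_mult)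
    thus False by (simp add: G_one E_one)
  qed
  have pf: "b \<in> Units Gamma7" if bc: "b \<in> carrier Gamma7" and pfb: "properfactor Gamma7 b p_poly" for b
  proof -
    from pfb obtain c where c: "c \<in> carrier Gamma7" "p_poly = b \<otimes>\<^bsub>Gamma7\<^esub> c"
      and npb: "\<not> p_poly divides\<^bsub>Gamma7\<^esub> b"
      unfolding properfactor_def factor_def by blast
    have b1: "finite (supp b)" "\<forall>n. b n \<in> Qzeta7" using bc by (simp_all add: G_carrier supp_def)
    have c1: "finite (supp c)" "\<forall>n. c n \<in> Qzeta7" using c(1) by (simp_all add: G_carrier supp_def)
    have p: "p_poly = laurent_mult b c" using c(2) by (simp add: G_mult)
    note mf = main_fact[OF b1 c1 p]
    show ?thesis
    proof (cases "degree (Qp b) = 0")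
      case True
      have "b = lmono (b (lo b)) (lo b)" by (rule deg0_mono[OF b1(1) mf(1) True])
      moreover have "b (lo b) \<noteq> 0" using lohi(1)[OF b1(1) mf(1)] by (simp add: supp_def)
      ultimately show ?thesis using mono_unit b1(2) by metis
    next
      case False
      hence "degree (Qp c) = 0" using mf(3) by simp
      hence cm: "c = lmono (c (lo c)) (lo c)" by (rule deg0_mono[OF c1(1) mf(2)])
      define u where "u = c (lo c)"
      define l where "l = lo c"
      have u0: "u \<noteq> 0" using lohi(1)[OF c1(1) mf(2)] by (simp add: supp_def u_def)
      have uK: "inverse u \<in> Qzeta7" using c1(2) K_closed(7) by (simp add: u_def)
      have "p_poly = laurent_mult b (lmono u l)" unfolding u_def l_def by (subst cm[symmetric]) (rule p)
      hence pn: "p_poly = (\<lambda>n. b (n - l) * u)" using lm_mono_right[OF b1(1)] by simp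
      have "p_poly \<otimes>\<^bsub>Gamma7\<^esub> lmono (inverse u) (-l) = b"
        unfolding G_mult lm_mono_right[OF finp] using u0 by (subst pn) (simp add: fun_eq_iff)
      hence "p_poly divides\<^bsub>Gamma7\<^esub> b" unfolding factor_def using mono_carrier[OF uK] by metis
      with npb show ?thesis by contradiction
    qed
  qed
  show ?thesis unfolding ring_irreducible_def Divisibility.irreducible_def using nz nu pf by blast
qed

end
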